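(* The spectrum of the reflection monodromy matrix $\mathcal{T}(z)$ is preserved under the Hamiltonian flows (on the symplectic manifold $M_{2N}$) of each reflection Hamiltonian $P_k$, $0\le k\le N$. In particular, the coefficients of the characteristic polynomial $\det(\zeta-\mathcal{T}(z))$ (as a function of $\zeta$ and $z$) are invariant under these flows.
   Context: $SL_2^*$ denotes the Poisson variety with coordinate ring $\mathbf{C}[e,f,k^{\pm1}]$ and Poisson brackets $\{k,e\}=ke$, $\{k,f\}=-kf$, $\{e,f\}=2(k^2-k^{-2})$; $\omega=k^2+k^{-2}+ef$ is a Casimir and $\Sigma_t=\{\omega=t\}$ is a symplectic leaf. Fix $N\ge1$, $t_1,\dots,t_N\in\mathbf{C}$, $\xi\in\mathbf{C}^*$, $a_1,\dots,a_N\in\mathbf{C}^*$. The phase space is the symplectic manifold $M_{2N}=\Sigma_{t_1}\times\cdots\times\Sigma_{t_N}$ with coordinates $(e_j,f_j,k_j)$ at site $j$, functions at distinct sites Poisson commuting. Set $L_j(z)=\begin{pmatrix} zk_j-z^{-1}k_j^{-1} & e_j\\ f_j & zk_j^{-1}-z^{-1}k_j\end{pmatrix}$, $K(z)=\begin{pmatrix}\xi z-z^{-1}\xi^{-1}&0\\0&\xi z^{-1}-z\xi^{-1}\end{pmatrix}$, and $\mathcal{T}(z)=\frac{1}{z-z^{-1}}L_1(a_1z)\cdots L_N(a_Nz)\,K(z)\,L_N(z/a_N)\cdots L_1(z/a_1)$, $t(z)=\frac12\operatorname{tr}\mathcal{T}(z)$. With $w=z^2$, the reflection Hamiltonians $P_0,\dots,P_N$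 are the functions on $M_{2N}$ determined by $t(z)=\frac12\big(\frac{w+1}{w-1}\big)\big(\sum_{j=1}^N P_j\frac{w^j+w^{-j}}{2}+P_0\big)$. *)

theory Defs
  imports "HOL-Analysis.Analysis"
begin

text \<open>A point of the ambient Poisson variety (SL_2^*)^N is encoded by three coordinate
functions E, F, K :: nat => complex; the coordinates (e_j, f_j, k_j) of site j are
(E j, F j, K j), for 1 <= j <= N (values at other indices are irrelevant).\<close>

definition mat2 :: "complex \<Rightarrow> complex \<Rightarrow> complex \<Rightarrow> complex \<Rightarrow> complex^2^2" where
  "mat2 a b c d = (\<chi> i j. if i = 1 then (if j = 1 then a else b) else (if j = 1 then c else d))"

definition Lax :: "(nat \<Rightarrow> complex) \<Rightarrow> (nat \<Rightarrow> complex) \<Rightarrow> (nat \<Rightarrow> complex) \<Rightarrow> nat \<Rightarrow> complex \<Rightarrow> complex^2^2" where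
  "Lax E F K j z = mat2 (z * K j - inverse z * inverse (K j)) (E j) (F j) (z * inverse (K j) - inverse z * K j)"

definition Kmat :: "complex \<Rightarrow> complex \<Rightarrow> complex^2^2" where
  "Kmat \<xi> z = mat2 (\<xi> * z - inverse z * inverse \<xi>) 0 0 (\<xi> * inverse z - z * inverse \<xi>)"

definition monodromy ::
  "nat \<Rightarrow> (nat \<Rightarrow> complex) \<Rightarrow> complex \<Rightarrow> (nat \<Rightarrow> complex) \<Rightarrow> (nat \<Rightarrow> complex) \<Rightarrow> (nat \<Rightarrow> complex)
   \<Rightarrow> complex \<Rightarrow> complex^2^2" where
  "monodromy N a \<xi> E F K z =
     (let P = (foldr (\<lambda>j M. Lax E F K j (a j * z) ** M) [1..<N+1] (mat 1))
              ** Kmat \<xi> z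
              ** (foldr (\<lambda>j M. M ** Lax E F K j (z / a j)) [1..<N+1] (mat 1))
      in (\<chi> i l. (1 / (z - inverse z)) * P $ i $ l))"

definition tfun ::
  "nat \<Rightarrow> (nat \<Rightarrow> complex) \<Rightarrow> complex \<Rightarrow> (nat \<Rightarrow> complex) \<Rightarrow> (nat \<Rightarrow> complex) \<Rightarrow> (nat \<Rightarrow> complex)
   \<Rightarrow> complex \<Rightarrow> complex" where
  "tfun N a \<xi> E F K z = (monodromy N a \<xi> E F K z $ 1 $ 1 + monodromy N a \<xi> E F K z $ 2 $ 2) / 2"

definition casimir :: "(nat \<Rightarrow> complex) \<Rightarrow> (nat \<Rightarrow> complex) \<Rightarrow> (nat \<Rightarrow> complex) \<Rightarrow> nat \<Rightarrow> complex" where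
  "casimir E F K j = K j ^ 2 + inverse (K j) ^ 2 + E j * F j"

definition ambient :: "nat \<Rightarrow> (nat \<Rightarrow> complex) \<Rightarrow> bool" where
  "ambient N K = (\<forall>j\<in>{1..N}. K j \<noteq> 0)"

definition in_leaf :: "nat \<Rightarrow> (nat \<Rightarrow> complex) \<Rightarrow> (nat \<Rightarrow> complex) \<Rightarrow> (nat \<Rightarrow> complex) \<Rightarrow> (nat \<Rightarrow> complex) \<Rightarrow> bool" where
  "in_leaf N tt E F K = (ambient N K \<and> (\<forall>j\<in>{1..N}. casimir E F K j = tt j))"

definition dE where "dE H E F K j = deriv (\<lambda>h::complex. H (E(j := E j + h)) F K) 0"
definition dF where "dF H E F K j = deriv (\<lambda>h::complex. H E (F(j := F j + h)) K) 0"
definition dK where "dK H E F K j = deriv (\<lambda>h::complex. H E F (K(j := K j + h))) 0"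

text \<open>Hamiltonian vector field x' = {x, H} of H for the Poisson structure
  {k,e} = k e, {k,f} = -k f, {e,f} = 2(k^2 - k^-2), sites Poisson commuting.\<close>
definition hamE where
  "hamE H E F K j = - K j * E j * dK H E F K j + 2 * (K j ^ 2 - inverse (K j) ^ 2) * dF H E F K j"
definition hamF where
  "hamF H E F K j = K j * F j * dK H E F K j - 2 * (K j ^ 2 - inverse (K j) ^ 2) * dE H E F K j"
definition hamK where
  "hamK H E F K j = K j * E j * dE H E F K j - K j * F j * dF H E F K j"

definition ham_flow_curve where
  "ham_flow_curve N tt H gE gF gK lo hi =
     (\<forall>s\<in>{lo..hi}. in_leaf N tt (gE s) (gF s) (gK s) \<and>
        (\<forall>j\<in>{1..N}.
           ((\<lambda>r. gE r j) has_vector_derivative hamE H (gE s) (gF s) (gK s) j) (at s within {lo..hi}) \<and>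
           ((\<lambda>r. gF r j) has_vector_derivative hamF H (gE s) (gF s) (gK s) j) (at s within {lo..hi}) \<and>
           ((\<lambda>r. gK r j) has_vector_derivative hamK H (gE s) (gF s) (gK s) j) (at s within {lo..hi})))"

end

theory Submission
  imports Defs "HOL-Computational_Algebra.Polynomial"
begin

lemma mat2_nth[simp]:
  "mat2 a b c d $ 1 $ 1 = a" "mat2 a b c d $ 1 $ 2 = b"
  "mat2 a b c d $ 2 $ 1 = c" "mat2 a b c d $ 2 $ 2 = d"
  by (simp_all add: mat2_def)

lemma two_ne_one_2[simp]: "(2::2) \<noteq> 1" "(1::2) \<noteq> 2" by simp_all

lemma mat2_eta: "(M::complex^2^2) = mat2 (M$1$1) (M$1$2) (M$2$1) (M$2$2)"
  by (simp add: vec_eq_iff forall_2)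

lemma mat2_mult: "mat2 a b c d ** mat2 a' b' c' d' =
   mat2 (a*a'+b*c') (a*b'+b*d') (c*a'+d*c') (c*b'+d*d')"
  by (simp add: vec_eq_iff forall_2 matrix_matrix_mult_def sum_2)

lemma mat2_add: "mat2 a b c d + mat2 a' b' c' d' = mat2 (a+a') (b+b') (c+c') (d+d')"
  by (simp add: vec_eq_iff forall_2)

lemma mat2_diff: "mat2 a b c d - mat2 a' b' c' d' = mat2 (a-a') (b-b') (c-c') (d-d')"
  by (simp add: vec_eq_iff forall_2)

lemma mat_one_mat2: "(mat 1 :: complex^2^2) = mat2 1 0 0 1"
  by (simp add: vec_eq_iff forall_2 mat_def)

lemma mat_zero_mat2: "(0 :: complex^2^2) = mat2 0 0 0 0"
  by (simp add: vec_eq_iff forall_2)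

definition tens :: "complex^2^2 \<Rightarrow> complex^2^2 \<Rightarrow> complex^(2\<times>2)^(2\<times>2)" where
  "tens A B = (\<chi> p q. A $ fst p $ fst q * B $ snd p $ snd q)"

lemma tens_nth[simp]: "tens A B $ (a,c) $ (b,d) = A$a$b * B$c$d"
  by (simp add: tens_def)

lemma sum_22: "sum f (UNIV::(2\<times>2) set) = f (1,1) + f (1,2) + f (2,1) + f (2,2)"
proof -
  have "(UNIV::(2\<times>2) set) = {(1,1),(1,2),(2,1),(2,2)}"
    using exhaust_2 by (auto simp: UNIV_Times_UNIV[symmetric] simp del: UNIV_Times_UNIV)
  show ?thesis unfolding \<open>UNIV = _\<close> by (simp add: add.assoc)
qed

lemma tens_mul: "tens A B ** tens C D = tens (A ** C) (B ** D)"
proof -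
  have "(tens A B ** tens C D) $ (a,c) $ (b,d) = tens (A ** C) (B ** D) $ (a,c) $ (b,d)" for a b c d
  proof -
    have "(tens A B ** tens C D) $ (a,c) $ (b,d) = (\<Sum>p\<in>UNIV\<times>UNIV. A$a$fst p * B$c$snd p * (C$fst p$b * D$snd p$d))"
      by (simp add: matrix_matrix_mult_def tens_def mult_ac flip: UNIV_Times_UNIV)
    also have "\<dots> = (\<Sum>i\<in>UNIV. \<Sum>m\<in>UNIV. A$a$i * C$i$b * (B$c$m * D$m$d))"
      by (simp add: sum.cartesian_product case_prod_beta, rule sum.cong, simp_all add: mult_ac)
    also have "\<dots> = (\<Sum>i\<in>UNIV. A$a$i * C$i$b) * (\<Sum>m\<in>UNIV. B$c$m * D$m$d)"
      by (simp add: sum_product)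
    finally show ?thesis by (simp add: matrix_matrix_mult_def)
  qed
  then show ?thesis by (simp add: vec_eq_iff)
qed

definition rm :: "complex \<Rightarrow> complex^(2\<times>2)^(2\<times>2)" where
  "rm x = (\<chi> p q. if fst p = snd p \<and> fst q = snd q \<and> fst p = fst q then (x + inverse x) / (x - inverse x)
     else if fst p \<noteq> snd p \<and> fst q = snd p \<and> snd q = fst p then 2 / (x - inverse x) else 0)"

lemma rm_nth[simp]:
  "rm x $ (1,1) $ (1,1) = (x + inverse x) / (x - inverse x)"
  "rm x $ (2,2) $ (2,2) = (x + inverse x) / (x - inverse x)"
  "rm x $ (1,2) $ (2,1) = 2 / (x - inverse x)"
  "rm x $ (2,1) $ (1,2) = 2 / (x - inverse x)"
  "rm x $ (1,1) $ (1,2) = 0" "rm x $ (1,1) $ (2,1) = 0" "rm x $ (1,1) $ (2,2) = 0"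
  "rm x $ (1,2) $ (1,1) = 0" "rm x $ (1,2) $ (1,2) = 0" "rm x $ (1,2) $ (2,2) = 0"
  "rm x $ (2,1) $ (1,1) = 0" "rm x $ (2,1) $ (2,1) = 0" "rm x $ (2,1) $ (2,2) = 0"
  "rm x $ (2,2) $ (1,1) = 0" "rm x $ (2,2) $ (1,2) = 0" "rm x $ (2,2) $ (2,1) = 0"
  by (simp_all add: rm_def)

definition sm :: "'a::times \<Rightarrow> 'a^'n^'m \<Rightarrow> 'a^'n^'m" where
  "sm c M = (\<chi> i j. c * M $ i $ j)"

lemma sm_nth[simp]: "sm c M $ i $ j = c * M $ i $ j" by (simp add: sm_def)

definition dL :: "nat \<Rightarrow> complex \<Rightarrow> complex \<Rightarrow> complex^2^2" where
  "dL d k w = (if d = 0 then mat2 0 1 0 0 else if d = 1 then mat2 0 0 1 0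
      else mat2 (w + inverse w * inverse k ^ 2) 0 0 (- (w * inverse k ^ 2) - inverse w))"

definition OM :: "complex \<Rightarrow> complex \<Rightarrow> complex \<Rightarrow> (nat \<Rightarrow> complex^2^2) \<Rightarrow> (nat \<Rightarrow> complex^2^2) \<Rightarrow> complex^(2\<times>2)^(2\<times>2)" where
  "OM e f k g h = sm (k * e) (tens (g 2) (h 0) - tens (g 0) (h 2))
     - sm (k * f) (tens (g 2) (h 1) - tens (g 1) (h 2))
     + sm (2 * (k^2 - inverse k ^ 2)) (tens (g 0) (h 1) - tens (g 1) (h 0))"

definition LL :: "complex \<Rightarrow> complex \<Rightarrow> complex \<Rightarrow> complex \<Rightarrow> complex^2^2" where
  "LL e f k w = mat2 (w * k - inverse w * inverse k) e f (w * inverse k - inverse w * k)"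

lemma site_PP:
  assumes "k \<noteq> 0" "z \<noteq> 0" "u \<noteq> 0" "z/u - u/z \<noteq> 0"
  shows "OM e f k (\<lambda>d. dL d k z) (\<lambda>d. dL d k u) =
    rm (z/u) ** tens (LL e f k z) (LL e f k u) - tens (LL e f k z) (LL e f k u) ** rm (z/u)"
proof -
  have h: "z * inverse z = 1" "u * inverse u = 1" "k * inverse k = 1"
     "(z * inverse u - u * inverse z) * inverse (z * inverse u - u * inverse z) = 1"
    using assms by (auto simp flip: divide_inverse)
  show ?thesis
  apply (simp add: vec_eq_iff forall_2 OM_def dL_def LL_def matrix_matrix_mult_def sum_22)
  apply (simp only: divide_inverse)
  apply (insert h)
  apply (intro conjI; algebra)
  done
qed


lemma site_PQ:
  assumes "k \<noteq> 0" "z \<noteq> 0" "u \<noteq> 0" "z*u - inverse (z*u) \<noteq> 0"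
  shows "OM e f k (\<lambda>d. dL d k z) (\<lambda>d. dL d k u) =
    tens (LL e f k z) (mat 1) ** rm (z*u) ** tens (mat 1) (LL e f k u)
    - tens (mat 1) (LL e f k u) ** rm (z*u) ** tens (LL e f k z) (mat 1)"
proof -
  have h: "z * inverse z = 1" "u * inverse u = 1" "k * inverse k = 1"
     "(z * u - inverse z * inverse u) * inverse (z * u - inverse z * inverse u) = 1"
    using assms by (auto simp: inverse_mult_distrib)
  show ?thesis
  apply (simp add: vec_eq_iff forall_2 OM_def dL_def LL_def matrix_matrix_mult_def sum_22 mat_def)
  apply (simp only: divide_inverse inverse_mult_distrib)
  apply (insert h)
  apply (intro conjI; algebra)
  done
qed

definition Km :: "complex \<Rightarrow> complex \<Rightarrow> complex^2^2" where
  "Km \<xi> z = mat2 (\<xi> * z - inverse z * inverse \<xi>) 0 0 (\<xi> * inverse z - z * inverse \<xi>)"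

definition RHS :: "complex^(2\<times>2)^(2\<times>2) \<Rightarrow> complex^(2\<times>2)^(2\<times>2) \<Rightarrow> complex^2^2 \<Rightarrow> complex^2^2 \<Rightarrow> complex^(2\<times>2)^(2\<times>2)" where
  "RHS r s X Y = r ** tens X Y - tens X Y ** r + tens X (mat 1) ** s ** tens (mat 1) Y - tens (mat 1) Y ** s ** tens X (mat 1)"

lemma refl_K:
  assumes "\<xi> \<noteq> 0" "z \<noteq> 0" "u \<noteq> 0" "z/u - u/z \<noteq> 0" "z*u - inverse (z*u) \<noteq> 0"
  shows "RHS (rm (z/u)) (rm (z*u)) (Km \<xi> z) (Km \<xi> u) = 0"
proof -
  have h: "z * inverse z = 1" "u * inverse u = 1" "\<xi> * inverse \<xi> = 1"
     "(z * u - inverse z * inverse u) * inverse (z * u - inverse z * inverse u) = 1"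
     "(z * inverse u - u * inverse z) * inverse (z * inverse u - u * inverse z) = 1"
    using assms by (auto simp: inverse_mult_distrib simp flip: divide_inverse)
  show ?thesis
  apply (simp add: RHS_def vec_eq_iff forall_2 Km_def matrix_matrix_mult_def sum_22 mat_def)
  apply (simp only: divide_inverse inverse_mult_distrib)
  apply (insert h)
  apply (intro conjI; algebra)
  done
qed

lemma mm_add_r: "((A::complex^'n^'m) + B) ** (C::complex^'p^'n) = A ** C + B ** C"
  by (simp add: vec_eq_iff matrix_matrix_mult_def sum.distrib distrib_right)
lemma mm_add_l: "(A::complex^'n^'m) ** ((B::complex^'p^'n) + C) = A ** B + A ** C"
  by (simp add: vec_eq_iff matrix_matrix_mult_def sum.distrib distrib_left)
lemma mm_diff_r: "((A::complex^'n^'m) - B) ** (C::complex^'p^'n) = A ** C - B ** C"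
  by (simp add: vec_eq_iff matrix_matrix_mult_def sum_subtractf left_diff_distrib)
lemma mm_diff_l: "(A::complex^'n^'m) ** ((B::complex^'p^'n) - C) = A ** B - A ** C"
  by (simp add: vec_eq_iff matrix_matrix_mult_def sum_subtractf right_diff_distrib)
lemma mm_sm_l: "sm c (A::complex^'n^'m) ** (B::complex^'p^'n) = sm c (A ** B)"
  by (simp add: vec_eq_iff matrix_matrix_mult_def sum_distrib_left mult.assoc)
lemma mm_sm_r: "(A::complex^'n^'m) ** sm c (B::complex^'p^'n) = sm c (A ** B)"
  by (simp add: vec_eq_iff matrix_matrix_mult_def sum_distrib_left mult_ac)
lemma mm_neg_r: "(- (A::complex^'n^'m)) ** (B::complex^'p^'n) = - (A ** B)"
  by (simp add: vec_eq_iff matrix_matrix_mult_def sum_negf)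
lemma mm_neg_l: "(A::complex^'n^'m) ** (- (B::complex^'p^'n)) = - (A ** B)"
  by (simp add: vec_eq_iff matrix_matrix_mult_def sum_negf)
lemma tens_one: "tens (mat 1) (mat 1) = mat 1"
  by (simp add: vec_eq_iff forall_2 mat_def)
lemma tens_mul_assoc: "M ** tens A B ** tens C D = M ** tens (A ** C) (B ** D)"
  by (simp add: tens_mul flip: matrix_mul_assoc)

lemma OM_transport:
  "OM e f k (\<lambda>d. A ** g d ** B) (\<lambda>d. C ** h d ** D) = tens A C ** OM e f k g h ** tens B D"
  by (simp add: OM_def mm_add_r mm_add_l mm_diff_r mm_diff_l mm_sm_l mm_sm_r tens_mul matrix_mul_assoc)

lemma step_alg:
  fixes P Q P' Q' X Y :: "complex^2^2" and r s :: "complex^(2\<times>2)^(2\<times>2)"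
  shows "tens P P' ** RHS r s X Y ** tens Q Q'
    + (r ** tens P P' - tens P P' ** r) ** tens (X ** Q) (Y ** Q')
    + tens (mat 1) (P' ** Y) ** (tens P (mat 1) ** s ** tens (mat 1) Q' - tens (mat 1) Q' ** s ** tens P (mat 1)) ** tens (X ** Q) (mat 1)
    + tens (P ** X) (mat 1) ** (tens Q (mat 1) ** s ** tens (mat 1) P' - tens (mat 1) P' ** s ** tens Q (mat 1)) ** tens (mat 1) (Y ** Q')
    + tens (P ** X) (P' ** Y) ** (r ** tens Q Q' - tens Q Q' ** r)
    = RHS r s (P ** X ** Q) (P' ** Y ** Q')"
  by (simp add: RHS_def mm_add_r mm_add_l mm_diff_r mm_diff_l matrix_mul_assoc tens_mul tens_mul_assoc)

fun Uf :: "(nat \<Rightarrow> complex) \<Rightarrow> complex \<Rightarrow> (nat \<Rightarrow> complex) \<Rightarrow> (nat \<Rightarrow> complex) \<Rightarrow> (nat \<Rightarrow> complex) \<Rightarrow> nat list \<Rightarrow> complex \<Rightarrow> complex^2^2" where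
  "Uf a \<xi> E F K [] z = Km \<xi> z"
| "Uf a \<xi> E F K (i#js) z = LL (E i) (F i) (K i) (a i * z) ** Uf a \<xi> E F K js z ** LL (E i) (F i) (K i) (z / a i)"

fun G :: "(nat \<Rightarrow> complex) \<Rightarrow> complex \<Rightarrow> (nat \<Rightarrow> complex) \<Rightarrow> (nat \<Rightarrow> complex) \<Rightarrow> (nat \<Rightarrow> complex) \<Rightarrow> nat list \<Rightarrow> complex \<Rightarrow> nat \<Rightarrow> nat \<Rightarrow> complex^2^2" where
  "G a \<xi> E F K [] z j d = 0"
| "G a \<xi> E F K (i#js) z j d =
     (if j = i then dL d (K i) (a i * z) ** Uf a \<xi> E F K js z ** LL (E i) (F i) (K i) (z / a i)
        + LL (E i) (F i) (K i) (a i * z) ** Uf a \<xi> E F K js z ** dL d (K i) (z / a i) else 0)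
     + LL (E i) (F i) (K i) (a i * z) ** G a \<xi> E F K js z j d ** LL (E i) (F i) (K i) (z / a i)"

lemma G_notin: "j \<notin> set js \<Longrightarrow> G a \<xi> E F K js z j d = 0"
  by (induction js) auto

definition BR where
  "BR a \<xi> E F K js z u = (\<Sum>j\<in>set js. OM (E j) (F j) (K j) (G a \<xi> E F K js z j) (G a \<xi> E F K js u j))"

lemma mm_sum_l: "(A::complex^'n^'m) ** sum (f :: _ \<Rightarrow> complex^'p^'n) S = (\<Sum>x\<in>S. A ** f x)"
  by (induction S rule: infinite_finite_induct) (auto simp: mm_add_l)
lemma mm_sum_r: "sum (f :: _ \<Rightarrow> complex^'n^'m) S ** (A::complex^'p^'n) = (\<Sum>x\<in>S. f x ** A)"
  by (induction S rule: infinite_finite_induct) (auto simp: mm_add_r)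

lemma OM_add_l: "OM e f k (\<lambda>d. g1 d + g2 d) h = OM e f k g1 h + OM e f k g2 h"
  by (simp add: vec_eq_iff OM_def tens_def algebra_simps)
lemma OM_add_r: "OM e f k g (\<lambda>d. h1 d + h2 d) = OM e f k g h1 + OM e f k g h2"
  by (simp add: vec_eq_iff OM_def tens_def algebra_simps)

lemma BR_formula:
  assumes "distinct js" "\<forall>j\<in>set js. K j \<noteq> 0 \<and> a j \<noteq> 0" "\<xi> \<noteq> 0" "z \<noteq> 0" "u \<noteq> 0"
    "z/u - u/z \<noteq> 0" "z*u - inverse (z*u) \<noteq> 0"
  shows "BR a \<xi> E F K js z u = RHS (rm (z/u)) (rm (z*u)) (Uf a \<xi> E F K js z) (Uf a \<xi> E F K js u)"
  using assms(1,2)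
proof (induction js)
  case Nil
  then show ?case using refl_K[OF assms(3-7)] by (simp add: BR_def)
next
  case (Cons i js)
  define P where "P = LL (E i) (F i) (K i) (a i * z)"
  define Q where "Q = LL (E i) (F i) (K i) (z / a i)"
  define P' where "P' = LL (E i) (F i) (K i) (a i * u)"
  define Q' where "Q' = LL (E i) (F i) (K i) (u / a i)"
  define X where "X = Uf a \<xi> E F K js z"
  define Y where "Y = Uf a \<xi> E F K js u"
  define r where "r = rm (z/u)"
  define s where "s = rm (z*u)"
  have ni: "i \<notin> set js" and dj: "distinct js" and ki: "K i \<noteq> 0" and ai: "a i \<noteq> 0"
    and hj: "\<forall>j\<in>set js. K j \<noteq> 0 \<and> a j \<noteq> 0" using Cons.prems by auto
  have IH: "BR a \<xi> E F K js z u = RHS r s X Y"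
    using Cons.IH[OF dj hj] by (simp add: r_def s_def X_def Y_def)
  have Gi: "G a \<xi> E F K (i#js) w i = (\<lambda>d. dL d (K i) (a i * w) ** Uf a \<xi> E F K js w ** LL (E i) (F i) (K i) (w / a i)
        + LL (E i) (F i) (K i) (a i * w) ** Uf a \<xi> E F K js w ** dL d (K i) (w / a i))" for w
    using G_notin[OF ni] by (simp add: fun_eq_iff)
  have Gj: "j \<in> set js \<Longrightarrow> G a \<xi> E F K (i#js) w j = (\<lambda>d. LL (E i) (F i) (K i) (a i * w) ** G a \<xi> E F K js w j d ** LL (E i) (F i) (K i) (w / a i))" for j w
    using ni by (auto simp: fun_eq_iff)
  have rest: "(\<Sum>j\<in>set js. OM (E j) (F j) (K j) (G a \<xi> E F K (i#js) z j) (G a \<xi> E F K (i#js) u j))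
     = tens P P' ** BR a \<xi> E F K js z u ** tens Q Q'"
    by (simp add: BR_def Gj OM_transport mm_sum_l mm_sum_r P_def P'_def Q_def Q'_def cong: sum.cong)
  have t1: "OM (E i) (F i) (K i) (\<lambda>d. dL d (K i) (a i * z) ** X ** Q) (\<lambda>d. dL d (K i) (a i * u) ** Y ** Q')
      = (r ** tens P P' - tens P P' ** r) ** tens (X ** Q) (Y ** Q')"
  proof -
    have "OM (E i) (F i) (K i) (\<lambda>d. mat 1 ** dL d (K i) (a i * z) ** (X ** Q)) (\<lambda>d. mat 1 ** dL d (K i) (a i * u) ** (Y ** Q'))
       = tens (mat 1) (mat 1) ** OM (E i) (F i) (K i) (\<lambda>d. dL d (K i) (a i * z)) (\<lambda>d. dL d (K i) (a i * u)) ** tens (X ** Q) (Y ** Q')"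
      by (rule OM_transport)
    moreover have "OM (E i) (F i) (K i) (\<lambda>d. dL d (K i) (a i * z)) (\<lambda>d. dL d (K i) (a i * u)) = r ** tens P P' - tens P P' ** r"
    proof -
      have e: "a i * z / (a i * u) = z / u" using ai by simp
      have "a i * z / (a i * u) - a i * u / (a i * z) \<noteq> 0" using assms(6) ai by simp
      from site_PP[OF ki _ _ this] show ?thesis using ai assms(4,5) e by (simp add: r_def P_def P'_def)
    qed
    ultimately show ?thesis by (simp add: tens_one matrix_mul_assoc)
  qed
  have t2: "OM (E i) (F i) (K i) (\<lambda>d. dL d (K i) (a i * z) ** X ** Q) (\<lambda>d. P' ** Y ** dL d (K i) (u / a i))
      = tens (mat 1) (P' ** Y) ** (tens P (mat 1) ** s ** tens (mat 1) Q' - tens (mat 1) Q' ** s ** tens P (mat 1)) ** tens (X ** Q) (mat 1)"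
  proof -
    have "OM (E i) (F i) (K i) (\<lambda>d. mat 1 ** dL d (K i) (a i * z) ** (X ** Q)) (\<lambda>d. (P' ** Y) ** dL d (K i) (u / a i) ** mat 1)
       = tens (mat 1) (P' ** Y) ** OM (E i) (F i) (K i) (\<lambda>d. dL d (K i) (a i * z)) (\<lambda>d. dL d (K i) (u / a i)) ** tens (X ** Q) (mat 1)"
      by (rule OM_transport)
    moreover have "OM (E i) (F i) (K i) (\<lambda>d. dL d (K i) (a i * z)) (\<lambda>d. dL d (K i) (u / a i)) = tens P (mat 1) ** s ** tens (mat 1) Q' - tens (mat 1) Q' ** s ** tens P (mat 1)"
    proof -
      have e: "a i * z * (u / a i) = z * u" using ai by simp
      have "a i * z * (u / a i) - inverse (a i * z * (u / a i)) \<noteq> 0" using assms(7) e by simp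
      from site_PQ[OF ki _ _ this] show ?thesis using ai assms(4,5) e by (simp add: s_def P_def Q'_def)
    qed
    ultimately show ?thesis by (simp add: matrix_mul_assoc)
  qed
  have t3: "OM (E i) (F i) (K i) (\<lambda>d. P ** X ** dL d (K i) (z / a i)) (\<lambda>d. dL d (K i) (a i * u) ** Y ** Q')
      = tens (P ** X) (mat 1) ** (tens Q (mat 1) ** s ** tens (mat 1) P' - tens (mat 1) P' ** s ** tens Q (mat 1)) ** tens (mat 1) (Y ** Q')"
  proof -
    have "OM (E i) (F i) (K i) (\<lambda>d. (P ** X) ** dL d (K i) (z / a i) ** mat 1) (\<lambda>d. mat 1 ** dL d (K i) (a i * u) ** (Y ** Q'))
       = tens (P ** X) (mat 1) ** OM (E i) (F i) (K i) (\<lambda>d. dL d (K i) (z / a i)) (\<lambda>d. dL d (K i) (a i * u)) ** tens (mat 1) (Y ** Q')"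
      by (rule OM_transport)
    moreover have "OM (E i) (F i) (K i) (\<lambda>d. dL d (K i) (z / a i)) (\<lambda>d. dL d (K i) (a i * u)) = tens Q (mat 1) ** s ** tens (mat 1) P' - tens (mat 1) P' ** s ** tens Q (mat 1)"
    proof -
      have e: "z / a i * (a i * u) = z * u" using ai by simp
      have "z / a i * (a i * u) - inverse (z / a i * (a i * u)) \<noteq> 0" using assms(7) e by simp
      from site_PQ[OF ki _ _ this] show ?thesis using ai assms(4,5) e by (simp add: s_def P'_def Q_def)
    qed
    ultimately show ?thesis by (simp add: matrix_mul_assoc)
  qed
  have t4: "OM (E i) (F i) (K i) (\<lambda>d. P ** X ** dL d (K i) (z / a i)) (\<lambda>d. P' ** Y ** dL d (K i) (u / a i))
      = tens (P ** X) (P' ** Y) ** (r ** tens Q Q' - tens Q Q' ** r)"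
  proof -
    have "OM (E i) (F i) (K i) (\<lambda>d. (P ** X) ** dL d (K i) (z / a i) ** mat 1) (\<lambda>d. (P' ** Y) ** dL d (K i) (u / a i) ** mat 1)
       = tens (P ** X) (P' ** Y) ** OM (E i) (F i) (K i) (\<lambda>d. dL d (K i) (z / a i)) (\<lambda>d. dL d (K i) (u / a i)) ** tens (mat 1) (mat 1)"
      by (rule OM_transport)
    moreover have "OM (E i) (F i) (K i) (\<lambda>d. dL d (K i) (z / a i)) (\<lambda>d. dL d (K i) (u / a i)) = r ** tens Q Q' - tens Q Q' ** r"
    proof -
      have e: "z / a i / (u / a i) = z / u" using ai by simp
      have "z / a i / (u / a i) - u / a i / (z / a i) \<noteq> 0" using assms(6) ai by simp
      from site_PP[OF ki _ _ this] show ?thesis using ai assms(4,5) e by (simp add: r_def Q_def Q'_def)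
    qed
    ultimately show ?thesis by (simp add: tens_one matrix_mul_assoc)
  qed
  have "BR a \<xi> E F K (i#js) z u = OM (E i) (F i) (K i) (G a \<xi> E F K (i#js) z i) (G a \<xi> E F K (i#js) u i)
      + (\<Sum>j\<in>set js. OM (E j) (F j) (K j) (G a \<xi> E F K (i#js) z j) (G a \<xi> E F K (i#js) u j))"
    using ni by (simp add: BR_def)
  also have "OM (E i) (F i) (K i) (G a \<xi> E F K (i#js) z i) (G a \<xi> E F K (i#js) u i) =
      OM (E i) (F i) (K i) (\<lambda>d. dL d (K i) (a i * z) ** X ** Q) (\<lambda>d. dL d (K i) (a i * u) ** Y ** Q')
    + OM (E i) (F i) (K i) (\<lambda>d. dL d (K i) (a i * z) ** X ** Q) (\<lambda>d. P' ** Y ** dL d (K i) (u / a i))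
    + OM (E i) (F i) (K i) (\<lambda>d. P ** X ** dL d (K i) (z / a i)) (\<lambda>d. dL d (K i) (a i * u) ** Y ** Q')
    + OM (E i) (F i) (K i) (\<lambda>d. P ** X ** dL d (K i) (z / a i)) (\<lambda>d. P' ** Y ** dL d (K i) (u / a i))"
    by (simp add: Gi OM_add_l OM_add_r P_def Q_def P'_def Q'_def X_def Y_def add_ac)
  also note rest
  also note IH
  finally have "BR a \<xi> E F K (i#js) z u = 
      (r ** tens P P' - tens P P' ** r) ** tens (X ** Q) (Y ** Q')
    + tens (mat 1) (P' ** Y) ** (tens P (mat 1) ** s ** tens (mat 1) Q' - tens (mat 1) Q' ** s ** tens P (mat 1)) ** tens (X ** Q) (mat 1)
    + tens (P ** X) (mat 1) ** (tens Q (mat 1) ** s ** tens (mat 1) P' - tens (mat 1) P' ** s ** tens Q (mat 1)) ** tens (mat 1) (Y ** Q')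
    + tens (P ** X) (P' ** Y) ** (r ** tens Q Q' - tens Q Q' ** r)
    + tens P P' ** RHS r s X Y ** tens Q Q'"
    by (simp only: t1 t2 t3 t4)
  also have "\<dots> = RHS r s (P ** X ** Q) (P' ** Y ** Q')"
    using step_alg[of P P' r s X Y Q Q'] by (simp add: add_ac)
  finally show ?case by (simp add: r_def s_def P_def Q_def P'_def Q'_def X_def Y_def)
qed

definition tr4 :: "complex^(2\<times>2)^(2\<times>2) \<Rightarrow> complex" where
  "tr4 M = (\<Sum>p\<in>UNIV. M $ p $ p)"

lemma tr4_comm: "tr4 (A ** B) = tr4 (B ** A)"
  unfolding tr4_def matrix_matrix_mult_def by (simp, subst sum.swap, simp add: mult.commute)

lemma tr4_add: "tr4 (A + B) = tr4 A + tr4 B" and tr4_diff: "tr4 (A - B) = tr4 A - tr4 B"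
  by (simp_all add: tr4_def sum.distrib sum_subtractf)

lemma tr4_RHS: "tr4 (RHS r s X Y) = 0"
proof -
  have c: "tens X (mat 1) ** tens (mat 1) Y = tens (mat 1) Y ** tens X (mat 1)"
    by (simp add: tens_mul)
  have "tr4 (tens X (mat 1) ** s ** tens (mat 1) Y) = tr4 (tens (mat 1) Y ** (tens X (mat 1) ** s))"
    using tr4_comm by blast
  also have "\<dots> = tr4 (tens X (mat 1) ** tens (mat 1) Y ** s)" by (simp add: c matrix_mul_assoc)
  also have "\<dots> = tr4 (tens (mat 1) Y ** s ** tens X (mat 1))"
    by (metis tr4_comm c matrix_mul_assoc)
  finally show ?thesis unfolding RHS_def by (simp add: tr4_add tr4_diff tr4_comm[of r])
qed

definition tr2 :: "complex^2^2 \<Rightarrow> complex" where "tr2 M = M$1$1 + M$2$2"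

definition om :: "complex \<Rightarrow> complex \<Rightarrow> complex \<Rightarrow> (nat \<Rightarrow> complex) \<Rightarrow> (nat \<Rightarrow> complex) \<Rightarrow> complex" where
  "om e f k g h = k * e * (g 2 * h 0 - g 0 * h 2) - k * f * (g 2 * h 1 - g 1 * h 2)
     + 2 * (k^2 - inverse k ^ 2) * (g 0 * h 1 - g 1 * h 0)"

lemma om_tr: "om e f k (\<lambda>d. tr2 (g d)) (\<lambda>d. tr2 (h d)) = tr4 (OM e f k g h)"
  by (simp add: om_def OM_def tr4_def tr2_def sum_22 algebra_simps)

lemma tr4_zero[simp]: "tr4 0 = 0" by (simp add: tr4_def)

lemma tr4_sum: "tr4 (sum f S) = (\<Sum>x\<in>S. tr4 (f x))"
  by (induction S rule: infinite_finite_induct) (auto simp: tr4_add)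

lemma involution:
  assumes "distinct js" "\<forall>j\<in>set js. K j \<noteq> 0 \<and> a j \<noteq> 0" "\<xi> \<noteq> 0" "z \<noteq> 0" "u \<noteq> 0"
    "z/u - u/z \<noteq> 0" "z*u - inverse (z*u) \<noteq> 0"
  shows "(\<Sum>j\<in>set js. om (E j) (F j) (K j) (\<lambda>d. tr2 (G a \<xi> E F K js z j d)) (\<lambda>d. tr2 (G a \<xi> E F K js u j d))) = 0"
proof -
  have "(\<Sum>j\<in>set js. om (E j) (F j) (K j) (\<lambda>d. tr2 (G a \<xi> E F K js z j d)) (\<lambda>d. tr2 (G a \<xi> E F K js u j d)))
     = tr4 (BR a \<xi> E F K js z u)"
    by (simp add: om_tr BR_def tr4_sum)
  also have "\<dots> = 0" using BR_formula[OF assms] tr4_RHS by simp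
  finally show ?thesis .
qed

definition mder :: "('v::real_normed_vector \<Rightarrow> complex) \<Rightarrow> ('v \<Rightarrow> complex^'n^'m) \<Rightarrow> complex^'n^'m \<Rightarrow> 'v \<Rightarrow> 'v set \<Rightarrow> bool" where
  "mder lf M DM x0 S \<longleftrightarrow> (\<forall>p q. ((\<lambda>t. M t $ p $ q) has_derivative (\<lambda>h. lf h * DM $ p $ q)) (at x0 within S))"

lemma mder_const: "mder lf (\<lambda>t. C) 0 x0 S"
  unfolding mder_def by simp

lemma mder_mult:
  assumes "mder lf A DA x0 S" "mder lf B DB x0 S"
  shows "mder lf (\<lambda>t. A t ** B t) (DA ** B x0 + A x0 ** DB) x0 S"
  unfolding mder_def
proof (intro allI)
  fix p q
  have "((\<lambda>t. \<Sum>k\<in>UNIV. A t $ p $ k * B t $ k $ q) has_derivative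
     (\<lambda>h. \<Sum>k\<in>UNIV. A x0 $ p $ k * (lf h * DB $ k $ q) + lf h * DA $ p $ k * B x0 $ k $ q)) (at x0 within S)"
    using assms unfolding mder_def by (intro has_derivative_sum has_derivative_mult) auto
  moreover have "(\<lambda>t. (A t ** B t) $ p $ q) = (\<lambda>t. \<Sum>k\<in>UNIV. A t $ p $ k * B t $ k $ q)"
    by (simp add: matrix_matrix_mult_def fun_eq_iff)
  moreover have "(\<lambda>h. lf h * (DA ** B x0 + A x0 ** DB) $ p $ q) =
     (\<lambda>h. \<Sum>k\<in>UNIV. A x0 $ p $ k * (lf h * DB $ k $ q) + lf h * DA $ p $ k * B x0 $ k $ q)"
    by (simp add: matrix_matrix_mult_def fun_eq_iff sum_distrib_left sum.distrib algebra_simps)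
  ultimately show "((\<lambda>t. (A t ** B t) $ p $ q) has_derivative (\<lambda>h. lf h * (DA ** B x0 + A x0 ** DB) $ p $ q)) (at x0 within S)"
    by simp
qed

lemma mder_LL:
  assumes e: "(eC has_derivative (\<lambda>h. lf h * De)) (at x0 within S)"
    and f: "(fC has_derivative (\<lambda>h. lf h * Df)) (at x0 within S)"
    and k: "(kC has_derivative (\<lambda>h. lf h * Dk)) (at x0 within S)"
    and k0: "kC x0 \<noteq> 0"
  shows "mder lf (\<lambda>t. LL (eC t) (fC t) (kC t) w)
     (sm De (dL 0 (kC x0) w) + sm Df (dL 1 (kC x0) w) + sm Dk (dL 2 (kC x0) w)) x0 S"
proof -
  have ki: "((\<lambda>t. inverse (kC t)) has_derivative (\<lambda>h. - (inverse (kC x0) * (lf h * Dk) * inverse (kC x0)))) (at x0 within S)"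
    by (rule Deriv.has_derivative_inverse[OF k0 k])
  have d11: "((\<lambda>t. w * kC t - inverse w * inverse (kC t)) has_derivative
      (\<lambda>h. lf h * (Dk * (w + inverse w * inverse (kC x0) ^ 2)))) (at x0 within S)"
    by (rule has_derivative_eq_rhs[OF has_derivative_diff[OF has_derivative_mult_right[OF k] has_derivative_mult_right[OF ki]]])
       (simp add: fun_eq_iff power2_eq_square algebra_simps)
  have d22: "((\<lambda>t. w * inverse (kC t) - inverse w * kC t) has_derivative
      (\<lambda>h. lf h * (Dk * (- (w * inverse (kC x0) ^ 2) - inverse w)))) (at x0 within S)"
    by (rule has_derivative_eq_rhs[OF has_derivative_diff[OF has_derivative_mult_right[OF ki] has_derivative_mult_right[OF k]]])
       (simp add: fun_eq_iff power2_eq_square algebra_simps)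
  show ?thesis
    unfolding mder_def forall_2
    using d11 d22 e f by (simp add: LL_def dL_def)
qed

lemma tr2_add: "tr2 (A + B) = tr2 A + tr2 B" and tr2_sm: "tr2 (sm c A) = c * tr2 A"
  and tr2_zero: "tr2 0 = 0"
  by (simp_all add: tr2_def algebra_simps)

lemma tr2_sum: "tr2 (sum f S) = (\<Sum>x\<in>S. tr2 (f x))"
  by (induction S rule: infinite_finite_induct) (auto simp: tr2_add tr2_zero)

lemma sm_add: "sm c ((A::complex^'n^'m) + B) = sm c A + sm c B" by (simp add: vec_eq_iff distrib_left)
lemma sm_zero: "sm (c::complex) 0 = 0" by (simp add: vec_eq_iff)

definition DUf where
  "DUf a \<xi> E F K js z De Df Dk = (\<Sum>j\<in>set js. sm (De j) (G a \<xi> E F K js z j 0)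
       + sm (Df j) (G a \<xi> E F K js z j 1) + sm (Dk j) (G a \<xi> E F K js z j 2))"

lemma mder_Uf:
  assumes "distinct js"
    and "\<forall>j\<in>set js. ((\<lambda>t. eC t j) has_derivative (\<lambda>h. lf h * De j)) (at x0 within S)
       \<and> ((\<lambda>t. fC t j) has_derivative (\<lambda>h. lf h * Df j)) (at x0 within S)
       \<and> ((\<lambda>t. kC t j) has_derivative (\<lambda>h. lf h * Dk j)) (at x0 within S) \<and> kC x0 j \<noteq> 0"
  shows "mder lf (\<lambda>t. Uf a \<xi> (eC t) (fC t) (kC t) js z) (DUf a \<xi> (eC x0) (fC x0) (kC x0) js z De Df Dk) x0 S"
  using assms
proof (induction js)
  case Nil
  then show ?case by (simp add: DUf_def mder_const)
next
  case (Cons i js)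
  let ?E = "eC x0" and ?F = "fC x0" and ?K = "kC x0"
  define P where "P = LL (?E i) (?F i) (?K i) (a i * z)"
  define Q where "Q = LL (?E i) (?F i) (?K i) (z / a i)"
  define X where "X = Uf a \<xi> ?E ?F ?K js z"
  define dP where "dP = sm (De i) (dL 0 (?K i) (a i * z)) + sm (Df i) (dL 1 (?K i) (a i * z)) + sm (Dk i) (dL 2 (?K i) (a i * z))"
  define dQ where "dQ = sm (De i) (dL 0 (?K i) (z / a i)) + sm (Df i) (dL 1 (?K i) (z / a i)) + sm (Dk i) (dL 2 (?K i) (z / a i))"
  have ni: "i \<notin> set js" using Cons.prems by auto
  have hi: "((\<lambda>t. eC t i) has_derivative (\<lambda>h. lf h * De i)) (at x0 within S)"
     "((\<lambda>t. fC t i) has_derivative (\<lambda>h. lf h * Df i)) (at x0 within S)"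
     "((\<lambda>t. kC t i) has_derivative (\<lambda>h. lf h * Dk i)) (at x0 within S)" "kC x0 i \<noteq> 0"
    using Cons.prems by auto
  have mP: "mder lf (\<lambda>t. LL (eC t i) (fC t i) (kC t i) (a i * z)) dP x0 S"
    unfolding dP_def by (rule mder_LL[OF hi])
  have mQ: "mder lf (\<lambda>t. LL (eC t i) (fC t i) (kC t i) (z / a i)) dQ x0 S"
    unfolding dQ_def by (rule mder_LL[OF hi])
  have mX: "mder lf (\<lambda>t. Uf a \<xi> (eC t) (fC t) (kC t) js z) (DUf a \<xi> ?E ?F ?K js z De Df Dk) x0 S"
    using Cons by auto
  have m: "mder lf (\<lambda>t. Uf a \<xi> (eC t) (fC t) (kC t) (i#js) z)
     ((dP ** X + P ** DUf a \<xi> ?E ?F ?K js z De Df Dk) ** Q + (P ** X) ** dQ) x0 S"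
    using mder_mult[OF mder_mult[OF mP mX] mQ] by (simp add: P_def Q_def X_def)
  have Gi: "G a \<xi> ?E ?F ?K (i#js) z i d = dL d (?K i) (a i * z) ** X ** Q + P ** X ** dL d (?K i) (z / a i)" for d
    using G_notin[OF ni] by (simp add: P_def Q_def X_def)
  have Gj: "j \<in> set js \<Longrightarrow> G a \<xi> ?E ?F ?K (i#js) z j d = P ** G a \<xi> ?E ?F ?K js z j d ** Q" for j d
    using ni by (auto simp: P_def Q_def)
  have "DUf a \<xi> ?E ?F ?K (i#js) z De Df Dk =
     (sm (De i) (G a \<xi> ?E ?F ?K (i#js) z i 0) + sm (Df i) (G a \<xi> ?E ?F ?K (i#js) z i 1) + sm (Dk i) (G a \<xi> ?E ?F ?K (i#js) z i 2))
     + (\<Sum>j\<in>set js. sm (De j) (G a \<xi> ?E ?F ?K (i#js) z j 0)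
       + sm (Df j) (G a \<xi> ?E ?F ?K (i#js) z j 1) + sm (Dk j) (G a \<xi> ?E ?F ?K (i#js) z j 2))"
    using ni by (simp add: DUf_def)
  also have "\<dots> = (sm (De i) (dL 0 (?K i) (a i * z) ** X ** Q + P ** X ** dL 0 (?K i) (z / a i))
       + sm (Df i) (dL 1 (?K i) (a i * z) ** X ** Q + P ** X ** dL 1 (?K i) (z / a i))
       + sm (Dk i) (dL 2 (?K i) (a i * z) ** X ** Q + P ** X ** dL 2 (?K i) (z / a i)))
     + (\<Sum>j\<in>set js. sm (De j) (P ** G a \<xi> ?E ?F ?K js z j 0 ** Q)
       + sm (Df j) (P ** G a \<xi> ?E ?F ?K js z j 1 ** Q) + sm (Dk j) (P ** G a \<xi> ?E ?F ?K js z j 2 ** Q))"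
    by (simp only: Gi, rule arg_cong[where f="\<lambda>x. _ + x"], rule sum.cong, simp_all only: Gj)
  also have "\<dots> = (dP ** X + P ** DUf a \<xi> ?E ?F ?K js z De Df Dk) ** Q + (P ** X) ** dQ"
    by (simp only: DUf_def dP_def dQ_def mm_add_l mm_add_r mm_sm_l mm_sm_r mm_sum_l mm_sum_r
        sm_add sum.distrib matrix_mul_assoc) (simp add: add_ac)
  finally show ?case using m by simp
qed

lemma tr_DUf: "tr2 (DUf a \<xi> E F K js z De Df Dk) = (\<Sum>j\<in>set js. De j * tr2 (G a \<xi> E F K js z j 0)
       + Df j * tr2 (G a \<xi> E F K js z j 1) + Dk j * tr2 (G a \<xi> E F K js z j 2))"
  by (simp add: DUf_def tr2_sum tr2_add tr2_sm)

lemma mder_tr2: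
  assumes "mder lf M DM x0 S"
  shows "((\<lambda>t. tr2 (M t)) has_derivative (\<lambda>h. lf h * tr2 DM)) (at x0 within S)"
proof -
  have a: "((\<lambda>t. M t $ 1 $ 1) has_derivative (\<lambda>h. lf h * DM $ 1 $ 1)) (at x0 within S)"
   and b: "((\<lambda>t. M t $ 2 $ 2) has_derivative (\<lambda>h. lf h * DM $ 2 $ 2)) (at x0 within S)"
    using assms unfolding mder_def by blast+
  show ?thesis unfolding tr2_def
    by (rule has_derivative_eq_rhs[OF has_derivative_add[OF a b]]) (simp add: fun_eq_iff algebra_simps)
qed

lemma lagrange:
  fixes ws :: "nat \<Rightarrow> complex" and n :: nat
  assumes inj: "inj_on ws {..n}"
  obtains lam :: "nat \<Rightarrow> nat \<Rightarrow> complex" where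
    "\<And>q m. degree q \<le> n \<Longrightarrow> coeff q m = (\<Sum>i\<le>n. poly q (ws i) * lam i m)"
proof -
  define L where "L i = smult (inverse (\<Prod>l\<in>{..n}-{i}. (ws i - ws l))) (\<Prod>l\<in>{..n}-{i}. [:- ws l, 1:])" for i
  have deg: "degree (L i) \<le> n" if "i \<le> n" for i
  proof -
    have "degree (L i) \<le> degree (\<Prod>l\<in>{..n}-{i}. [:- ws l, 1:])" unfolding L_def by (rule degree_smult_le)
    also have "\<dots> \<le> sum (degree \<circ> (\<lambda>l. [:- ws l, 1:])) ({..n}-{i})" by (rule degree_prod_sum_le) simp
    also have "\<dots> = card ({..n}-{i})" by simp
    also have "\<dots> = n" using that by simp
    finally show ?thesis .
  qed
  have ev: "poly (L i) (ws m) = (if m = i then 1 else 0)" if "i \<le> n" "m \<le> n" for i m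
  proof (cases "m = i")
    case True
    have "(\<Prod>l\<in>{..n}-{i}. (ws i - ws l)) \<noteq> 0"
      using inj that by (auto simp: inj_on_def)
    then show ?thesis using True by (simp add: L_def poly_prod)
  next
    case False
    then have "m \<in> {..n}-{i}" using that by auto
    then have "(\<Prod>l\<in>{..n}-{i}. poly [:- ws l, 1:] (ws m)) = 0"
      by (intro prod_zero) auto
    then show ?thesis using False by (simp add: L_def poly_prod)
  qed
  show ?thesis
  proof (rule that)
    fix q :: "complex poly" and m assume dq: "degree q \<le> n"
    define q' where "q' = (\<Sum>i\<le>n. smult (poly q (ws i)) (L i))"
    have dq': "degree q' \<le> n" unfolding q'_def
      by (intro degree_sum_le) (auto intro: order_trans[OF degree_smult_le] deg)
    have "q = q'"
    proof (rule poly_eqI_degree[where A = "ws ` {..n}"])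
      fix x assume "x \<in> ws ` {..n}"
      then obtain m where m: "m \<le> n" "x = ws m" by auto
      have "poly q' x = (\<Sum>i\<le>n. poly q (ws i) * (if m = i then 1 else 0))"
        unfolding q'_def using m ev by (simp add: poly_sum)
      also have "\<dots> = poly q x" using m by (simp add: if_distrib sum.delta cong: if_cong)
      finally show "poly q x = poly q' x" by simp
    next
      have "card (ws ` {..n}) = n + 1" using inj by (simp add: card_image)
      then show "degree q < card (ws ` {..n})" "degree q' < card (ws ` {..n})" using dq dq' by auto
    qed
    then have "coeff q m = coeff q' m" by simp
    then show "coeff q m = (\<Sum>i\<le>n. poly q (ws i) * coeff (L i) m)"
      by (simp add: q'_def coeff_sum)
  qed
qed


lemma P_repr:
  fixes P :: "nat \<Rightarrow> (nat \<Rightarrow> complex) \<Rightarrow> (nat \<Rightarrow> complex) \<Rightarrow> (nat \<Rightarrow> complex) \<Rightarrow> complex"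
  assumes P_def: "\<forall>E F K z. ambient N K \<and> z \<noteq> 0 \<and> z ^ 2 \<noteq> 1 \<and> z ^ 2 \<noteq> -1 \<longrightarrow>
          tfun N a \<xi> E F K z =
            (1/2) * ((z^2 + 1) / (z^2 - 1)) *
              ((\<Sum>j=1..N. P j E F K * ((z^2)^j + inverse (z^2)^j) / 2) + P 0 E F K)"
    and kN: "k \<le> N"
    and inj: "inj_on ws {..2*N}"
    and wsok: "\<forall>i\<le>2*N. ws i \<noteq> 0 \<and> ws i \<noteq> 1 \<and> ws i \<noteq> -1"
  obtains \<mu> where "\<forall>E F K. ambient N K \<longrightarrow> P k E F K = (\<Sum>i\<le>2*N. \<mu> i * tfun N a \<xi> E F K (csqrt (ws i)))"
proof -
  obtain lam where lam: "\<And>q m. degree q \<le> 2*N \<Longrightarrow> coeff q m = (\<Sum>i\<le>2*N. poly q (ws i) * lam i m)"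
    using lagrange[OF inj] by blast
  define c :: complex where "c = (if k = 0 then 1 else 2)"
  define \<mu> where "\<mu> i = c * ws i ^ N * (2 * (ws i - 1) / (ws i + 1)) * lam i (N+k)" for i
  show ?thesis
  proof (rule that, intro allI impI)
    fix E F K assume amb: "ambient N K"
    define q where "q = monom (P 0 E F K) N + (\<Sum>j\<in>{1..N}. monom (P j E F K / 2) (N+j) + monom (P j E F K / 2) (N-j))"
    have dq: "degree q \<le> 2*N" unfolding q_def
      by (intro degree_add_le degree_sum_le order_trans[OF degree_monom_le]) auto
    have cq: "P k E F K = c * coeff q (N+k)"
    proof (cases "k = 0")
      case True
      have "\<forall>j\<in>{1..N}. coeff (monom (P j E F K / 2) (N+j) + monom (P j E F K / 2) (N-j)) N = 0" by auto
      then show ?thesis using True by (simp add: q_def c_def coeff_sum)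
    next
      case False
      have "coeff q (N+k) = (\<Sum>j\<in>{1..N}. coeff (monom (P j E F K / 2) (N+j) + monom (P j E F K / 2) (N-j)) (N+k))"
        using False by (simp only: q_def coeff_add coeff_sum) simp
      also have "\<dots> = (\<Sum>j\<in>{1..N}. (if j = k then P j E F K / 2 else 0))"
        by (intro sum.cong refl) (use False in auto)
      also have "\<dots> = P k E F K / 2" using False kN by simp
      finally show ?thesis using False by (simp add: c_def mult.commute)
    qed
    have pq: "poly q (ws i) = ws i ^ N * (2 * (ws i - 1) / (ws i + 1)) * tfun N a \<xi> E F K (csqrt (ws i))"
      if "i \<le> 2*N" for i
    proof -
      define w where "w = ws i"
      have w0: "w \<noteq> 0" "w \<noteq> 1" "w \<noteq> -1" using wsok that by (auto simp: w_def)
      have z: "csqrt w \<noteq> 0" "(csqrt w)^2 = w" using w0 by auto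
      have t: "tfun N a \<xi> E F K (csqrt w) = (1/2) * ((w + 1) / (w - 1)) *
              ((\<Sum>j=1..N. P j E F K * (w^j + inverse w^j) / 2) + P 0 E F K)"
        using P_def[rule_format, of K "csqrt w" E F] amb z w0 by simp
      have "poly q w = w^N * ((\<Sum>j=1..N. P j E F K * (w^j + inverse w^j) / 2) + P 0 E F K)"
      proof -
        have perj: "poly (monom (P j E F K / 2) (N+j) + monom (P j E F K / 2) (N-j)) w
           = w^N * (P j E F K * (w^j + inverse w^j) / 2)" if "j \<in> {1..N}" for j
          using w0 that by (auto simp: poly_monom power_add power_diff field_simps)
        have "poly q w = poly (monom (P 0 E F K) N) w + (\<Sum>j\<in>{1..N}. poly (monom (P j E F K / 2) (N+j) + monom (P j E F K / 2) (N-j)) w)"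
          by (simp only: q_def poly_add poly_sum)
        also have "\<dots> = P 0 E F K * w^N + (\<Sum>j\<in>{1..N}. w^N * (P j E F K * (w^j + inverse w^j) / 2))"
          by (rule arg_cong2[where f="(+)"], simp add: poly_monom, rule sum.cong, simp, rule perj)
        also have "\<dots> = w^N * ((\<Sum>j=1..N. P j E F K * (w^j + inverse w^j) / 2) + P 0 E F K)"
          by (simp add: sum_distrib_left algebra_simps)
        finally show ?thesis .
      qed
      also have "\<dots> = w ^ N * (2 * (w - 1) / (w + 1)) * tfun N a \<xi> E F K (csqrt w)"
      proof -
        have "w + 1 \<noteq> 0" by (metis w0(3) neg_eq_iff_add_eq_0 minus_minus)
        have "w - 1 \<noteq> 0" using w0(2) by simp
        have ww: "w * w \<noteq> 1"
        proof
          assume "w * w = 1"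
          then have "(w - 1) * (w + 1) = 0" by (simp add: algebra_simps)
          with \<open>w + 1 \<noteq> 0\<close> \<open>w - 1 \<noteq> 0\<close> show False by simp
        qed
        with \<open>w + 1 \<noteq> 0\<close> \<open>w - 1 \<noteq> 0\<close> have one: "2 * (w - 1) / (w + 1) * (1/2 * ((w + 1) / (w - 1))) = 1"
          by (simp add: field_simps)
        have gen: "w^N * S = w^N * (2 * (w - 1) / (w + 1)) * (1/2 * ((w + 1) / (w - 1)) * S)" for S
        proof -
          have "w^N * (2 * (w - 1) / (w + 1)) * (1/2 * ((w + 1) / (w - 1)) * S)
              = w^N * S * (2 * (w - 1) / (w + 1) * (1/2 * ((w + 1) / (w - 1))))" by (simp only: mult_ac)
          then show ?thesis using one by simp
        qed
        show ?thesis unfolding t by (rule gen)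
      qed
      finally show ?thesis by (simp add: w_def)
    qed
    have "P k E F K = c * (\<Sum>i\<le>2*N. poly q (ws i) * lam i (N+k))" using cq lam[OF dq] by simp
    also have "\<dots> = (\<Sum>i\<le>2*N. \<mu> i * tfun N a \<xi> E F K (csqrt (ws i)))"
      unfolding sum_distrib_left
    proof (intro sum.cong refl)
      fix x assume "x \<in> {..2*N}"
      then have "x \<le> 2*N" by simp
      show "c * (poly q (ws x) * lam x (N + k)) = \<mu> x * tfun N a \<xi> E F K (csqrt (ws x))"
        unfolding pq[OF \<open>x \<le> 2*N\<close>] \<mu>_def by (simp only: mult_ac)
    qed
    finally show "P k E F K = (\<Sum>i\<le>2*N. \<mu> i * tfun N a \<xi> E F K (csqrt (ws i)))" .
  qed
qed

lemma Lax_LL: "Lax E F K j w = LL (E j) (F j) (K j) w" by (simp add: Lax_def LL_def)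
lemma Kmat_Km: "Kmat \<xi> z = Km \<xi> z" by (simp add: Kmat_def Km_def)

lemma foldr_Uf: "foldr (\<lambda>j M. Lax E F K j (a j * z) ** M) js (mat 1) ** Kmat \<xi> z **
    foldr (\<lambda>j M. M ** Lax E F K j (z / a j)) js (mat 1) = Uf a \<xi> E F K js z"
proof (induction js)
  case Nil
  then show ?case by (simp add: Kmat_Km)
next
  case (Cons i js)
  show ?case
    by (simp only: Uf.simps(2) flip: Cons.IH) (simp add: matrix_mul_assoc Lax_LL)
qed

definition cz :: "complex \<Rightarrow> complex" where "cz z = 1 / (z - inverse z) / 2"

lemma tfun_aux: "((\<chi> i l. (1/d) * U $ i $ l) $ 1 $ 1 + (\<chi> i l. (1/d) * U $ i $ l) $ 2 $ 2) / 2 = 1/d/2 * tr2 U"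
  by (simp add: tr2_def algebra_simps)

lemma tfun_tr: "tfun N a \<xi> E F K z = cz z * tr2 (Uf a \<xi> E F K [1..<N+1] z)"
  unfolding tfun_def monodromy_def Let_def foldr_Uf cz_def by (rule tfun_aux)

lemma monodromy_Uf: "monodromy N a \<xi> E F K z = (\<chi> i l. (1 / (z - inverse z)) * Uf a \<xi> E F K [1..<N+1] z $ i $ l)"
  unfolding monodromy_def Let_def foldr_Uf by simp

lemma det_char: "det (mat \<zeta> - (\<chi> i l. c * U $ i $ l)) = \<zeta>^2 - \<zeta> * c * tr2 U + c^2 * det (U::complex^2^2)"
  by (simp add: det_2 mat_def tr2_def algebra_simps power2_eq_square)

lemma det_LL: "k \<noteq> 0 \<Longrightarrow> w \<noteq> 0 \<Longrightarrow> det (LL e f k w) = w^2 + inverse w ^ 2 - (k^2 + inverse k ^ 2 + e * f)"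
  by (simp add: det_2 LL_def field_simps power2_eq_square)

lemma det_Uf_eq:
  assumes "\<forall>j\<in>set js. K j \<noteq> 0 \<and> K' j \<noteq> 0 \<and> a j \<noteq> 0 \<and> casimir E F K j = casimir E' F' K' j" "z \<noteq> 0"
  shows "det (Uf a \<xi> E F K js z) = det (Uf a \<xi> E' F' K' js z)"
  using assms(1)
proof (induction js)
  case Nil
  then show ?case by simp
next
  case (Cons i js)
  then have h: "K i \<noteq> 0" "K' i \<noteq> 0" "a i \<noteq> 0" "casimir E F K i = casimir E' F' K' i" by auto
  have "a i * z \<noteq> 0" "z / a i \<noteq> 0" using h assms(2) by auto
  then show ?case using Cons h by (simp add: det_mul det_LL casimir_def)
qed

lemma grad_tr:
  assumes "\<forall>m\<in>set js. K m \<noteq> 0" "distinct js" "j \<in> set js"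
  shows "((\<lambda>h. tr2 (Uf a \<xi> (E(j := E j + h)) F K js z)) has_field_derivative tr2 (G a \<xi> E F K js z j 0)) (at 0)"
    and "((\<lambda>h. tr2 (Uf a \<xi> E (F(j := F j + h)) K js z)) has_field_derivative tr2 (G a \<xi> E F K js z j 1)) (at 0)"
    and "((\<lambda>h. tr2 (Uf a \<xi> E F (K(j := K j + h)) js z)) has_field_derivative tr2 (G a \<xi> E F K js z j 2)) (at 0)"
proof -
  define D where "D m = (if m = j then 1 else 0 :: complex)" for m
  have upd: "((\<lambda>h. (X(j := X j + h)) m) has_derivative (\<lambda>h. h * D m)) (at 0)" for X :: "nat \<Rightarrow> complex" and m
  proof (cases "m = j")
    case True
    then show ?thesis by (simp add: D_def) (rule has_derivative_eq_rhs, (rule derivative_intros)+, simp)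
  next
    case False
    then show ?thesis by (simp add: D_def)
  qed
  have cst: "((\<lambda>h. X m) has_derivative (\<lambda>h. h * 0)) (at 0)" for X :: "nat \<Rightarrow> complex" and m
    by simp
  have sd: "(\<Sum>m\<in>set js. D m * tr2 (G a \<xi> E F K js z m d)) = tr2 (G a \<xi> E F K js z j d)" for d
  proof -
    have e: "(\<lambda>m. D m * tr2 (G a \<xi> E F K js z m d)) = (\<lambda>m. if m = j then tr2 (G a \<xi> E F K js z m d) else 0)"
      by (auto simp: D_def fun_eq_iff)
    show ?thesis unfolding e using assms(3) by (simp add: sum.delta)
  qed
  have fd: "(f has_derivative (\<lambda>h. h * c)) (at 0) \<Longrightarrow> (f has_field_derivative c) (at 0)" for f and c :: complex
    unfolding has_field_derivative_def by (erule has_derivative_eq_rhs) (simp add: fun_eq_iff mult.commute)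
  show "((\<lambda>h. tr2 (Uf a \<xi> (E(j := E j + h)) F K js z)) has_field_derivative tr2 (G a \<xi> E F K js z j 0)) (at 0)"
  proof (rule fd)
    have "mder (\<lambda>h. h) (\<lambda>h. Uf a \<xi> (E(j := E j + h)) ((\<lambda>h. F) h) ((\<lambda>h. K) h) js z)
        (DUf a \<xi> (E(j := E j + 0)) F K js z D (\<lambda>_. 0) (\<lambda>_. 0)) 0 UNIV"
      using assms upd cst by (intro mder_Uf) auto
    from mder_tr2[OF this] show "((\<lambda>h. tr2 (Uf a \<xi> (E(j := E j + h)) F K js z)) has_derivative (\<lambda>h. h * tr2 (G a \<xi> E F K js z j 0))) (at 0)"
      by (simp add: tr_DUf sd)
  qed
  show "((\<lambda>h. tr2 (Uf a \<xi> E (F(j := F j + h)) K js z)) has_field_derivative tr2 (G a \<xi> E F K js z j 1)) (at 0)"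
  proof (rule fd)
    have "mder (\<lambda>h. h) (\<lambda>h. Uf a \<xi> ((\<lambda>h. E) h) (F(j := F j + h)) ((\<lambda>h. K) h) js z)
        (DUf a \<xi> E (F(j := F j + 0)) K js z (\<lambda>_. 0) D (\<lambda>_. 0)) 0 UNIV"
      using assms upd cst by (intro mder_Uf) auto
    from mder_tr2[OF this] show "((\<lambda>h. tr2 (Uf a \<xi> E (F(j := F j + h)) K js z)) has_derivative (\<lambda>h. h * tr2 (G a \<xi> E F K js z j 1))) (at 0)"
      by (simp add: tr_DUf sd)
  qed
  show "((\<lambda>h. tr2 (Uf a \<xi> E F (K(j := K j + h)) js z)) has_field_derivative tr2 (G a \<xi> E F K js z j 2)) (at 0)"
  proof (rule fd)
    have "mder (\<lambda>h. h) (\<lambda>h. Uf a \<xi> ((\<lambda>h. E) h) ((\<lambda>h. F) h) (K(j := K j + h)) js z)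
        (DUf a \<xi> E F (K(j := K j + 0)) js z (\<lambda>_. 0) (\<lambda>_. 0) D) 0 UNIV"
      using assms upd cst by (intro mder_Uf) auto
    from mder_tr2[OF this] show "((\<lambda>h. tr2 (Uf a \<xi> E F (K(j := K j + h)) js z)) has_derivative (\<lambda>h. h * tr2 (G a \<xi> E F K js z j 2))) (at 0)"
      by (simp add: tr_DUf sd)
  qed
qed

lemma set_js: "set [1..<N+1] = {1..N}" by auto

lemma dP_vals:
  fixes P :: "nat \<Rightarrow> (nat \<Rightarrow> complex) \<Rightarrow> (nat \<Rightarrow> complex) \<Rightarrow> (nat \<Rightarrow> complex) \<Rightarrow> complex"
  assumes repr: "\<forall>E F K. ambient N K \<longrightarrow> P k E F K = (\<Sum>i\<le>2*N. \<mu> i * tfun N a \<xi> E F K (zs i))"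
    and amb: "ambient N K" and j: "j \<in> {1..N}"
  shows "dE (P k) E F K j = (\<Sum>i\<le>2*N. \<mu> i * cz (zs i) * tr2 (G a \<xi> E F K [1..<N+1] (zs i) j 0))"
    and "dF (P k) E F K j = (\<Sum>i\<le>2*N. \<mu> i * cz (zs i) * tr2 (G a \<xi> E F K [1..<N+1] (zs i) j 1))"
    and "dK (P k) E F K j = (\<Sum>i\<le>2*N. \<mu> i * cz (zs i) * tr2 (G a \<xi> E F K [1..<N+1] (zs i) j 2))"
proof -
  let ?js = "[1..<N+1]"
  have Kn: "\<forall>m\<in>set ?js. K m \<noteq> 0" using amb by (auto simp: ambient_def)
  have jj: "j \<in> set ?js" using j by auto
  have dj: "distinct ?js" by simp
  note g = grad_tr[OF Kn dj jj]
  have "((\<lambda>h. P k (E(j := E j + h)) F K) has_field_derivative (\<Sum>i\<le>2*N. \<mu> i * cz (zs i) * tr2 (G a \<xi> E F K ?js (zs i) j 0))) (at 0)"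
  proof -
    have e: "(\<lambda>h. P k (E(j := E j + h)) F K) = (\<lambda>h. \<Sum>i\<le>2*N. \<mu> i * (cz (zs i) * tr2 (Uf a \<xi> (E(j := E j + h)) F K ?js (zs i))))"
      using repr amb by (simp add: tfun_tr)
    have "((\<lambda>h. \<Sum>i\<le>2*N. \<mu> i * (cz (zs i) * tr2 (Uf a \<xi> (E(j := E j + h)) F K ?js (zs i)))) has_field_derivative
        (\<Sum>i\<le>2*N. \<mu> i * (cz (zs i) * tr2 (G a \<xi> E F K ?js (zs i) j 0)))) (at 0)"
      by (intro DERIV_sum DERIV_cmult g(1))
    then show ?thesis unfolding e by (simp add: mult.assoc)
  qed
  then show "dE (P k) E F K j = (\<Sum>i\<le>2*N. \<mu> i * cz (zs i) * tr2 (G a \<xi> E F K ?js (zs i) j 0))"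
    unfolding dE_def by (rule DERIV_imp_deriv)
  have "((\<lambda>h. P k E (F(j := F j + h)) K) has_field_derivative (\<Sum>i\<le>2*N. \<mu> i * cz (zs i) * tr2 (G a \<xi> E F K ?js (zs i) j 1))) (at 0)"
  proof -
    have e: "(\<lambda>h. P k E (F(j := F j + h)) K) = (\<lambda>h. \<Sum>i\<le>2*N. \<mu> i * (cz (zs i) * tr2 (Uf a \<xi> E (F(j := F j + h)) K ?js (zs i))))"
      using repr amb by (simp add: tfun_tr)
    have "((\<lambda>h. \<Sum>i\<le>2*N. \<mu> i * (cz (zs i) * tr2 (Uf a \<xi> E (F(j := F j + h)) K ?js (zs i)))) has_field_derivative
        (\<Sum>i\<le>2*N. \<mu> i * (cz (zs i) * tr2 (G a \<xi> E F K ?js (zs i) j 1)))) (at 0)"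
      by (intro DERIV_sum DERIV_cmult g(2))
    then show ?thesis unfolding e by (simp add: mult.assoc)
  qed
  then show "dF (P k) E F K j = (\<Sum>i\<le>2*N. \<mu> i * cz (zs i) * tr2 (G a \<xi> E F K ?js (zs i) j 1))"
    unfolding dF_def by (rule DERIV_imp_deriv)
  have "((\<lambda>h. P k E F (K(j := K j + h))) has_field_derivative (\<Sum>i\<le>2*N. \<mu> i * cz (zs i) * tr2 (G a \<xi> E F K ?js (zs i) j 2))) (at 0)"
  proof -
    have kj: "K j \<noteq> 0" using amb j by (auto simp: ambient_def)
    have ev: "eventually (\<lambda>h. h \<in> ball 0 (norm (K j))) (nhds (0::complex))"
      using kj by (intro eventually_nhds_in_open) auto
    have ev2: "eventually (\<lambda>h. P k E F (K(j := K j + h)) = (\<Sum>i\<le>2*N. \<mu> i * (cz (zs i) * tr2 (Uf a \<xi> E F (K(j := K j + h)) ?js (zs i))))) (nhds 0)"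
    proof (rule eventually_mono[OF ev])
      fix h :: complex assume "h \<in> ball 0 (norm (K j))"
      then have "norm h < norm (K j)" by simp
      then have "K j + h \<noteq> 0" by (metis add.commute add_eq_0_iff norm_minus_cancel order_less_irrefl)
      then have "ambient N (K(j := K j + h))" using amb by (auto simp: ambient_def)
      then show "P k E F (K(j := K j + h)) = (\<Sum>i\<le>2*N. \<mu> i * (cz (zs i) * tr2 (Uf a \<xi> E F (K(j := K j + h)) ?js (zs i))))"
        using repr by (simp add: tfun_tr)
    qed
    have "((\<lambda>h. \<Sum>i\<le>2*N. \<mu> i * (cz (zs i) * tr2 (Uf a \<xi> E F (K(j := K j + h)) ?js (zs i)))) has_field_derivative
        (\<Sum>i\<le>2*N. \<mu> i * (cz (zs i) * tr2 (G a \<xi> E F K ?js (zs i) j 2)))) (at 0)"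
      by (intro DERIV_sum DERIV_cmult g(3))
    then show ?thesis using DERIV_cong_ev[OF refl ev2 refl] by (simp add: mult.assoc)
  qed
  then show "dK (P k) E F K j = (\<Sum>i\<le>2*N. \<mu> i * cz (zs i) * tr2 (G a \<xi> E F K ?js (zs i) j 2))"
    unfolding dK_def by (rule DERIV_imp_deriv)
qed

lemma om_lin:
  "om e f k g (\<lambda>d. \<Sum>i\<in>I. c i * h i d) = (\<Sum>i\<in>I. c i * om e f k g (h i))"
proof (induction I rule: infinite_finite_induct)
  case (infinite A) then show ?case by (simp add: om_def)
next
  case empty then show ?case by (simp add: om_def)
next
  case (insert x F) then show ?case by (simp add: om_def algebra_simps)
qed


theorem mainTheorem3:
  fixes N :: nat and tt :: "nat \<Rightarrow> complex" and \<xi> :: complex and a :: "nat \<Rightarrow> complex"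
    and P :: "nat \<Rightarrow> (nat \<Rightarrow> complex) \<Rightarrow> (nat \<Rightarrow> complex) \<Rightarrow> (nat \<Rightarrow> complex) \<Rightarrow> complex"
    and gE gF gK :: "real \<Rightarrow> nat \<Rightarrow> complex" and lo hi :: real and k :: nat
  assumes "N \<ge> 1" and "\<xi> \<noteq> 0" and "\<forall>j\<in>{1..N}. a j \<noteq> 0"
    and P_def: "\<forall>E F K z. ambient N K \<and> z \<noteq> 0 \<and> z ^ 2 \<noteq> 1 \<and> z ^ 2 \<noteq> -1 \<longrightarrow>
          tfun N a \<xi> E F K z =
            (1/2) * ((z^2 + 1) / (z^2 - 1)) *
              ((\<Sum>j=1..N. P j E F K * ((z^2)^j + inverse (z^2)^j) / 2) + P 0 E F K)"
    and "k \<le> N"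
    and "lo \<le> hi"
    and "ham_flow_curve N tt (P k) gE gF gK lo hi"
  shows "\<forall>s\<in>{lo..hi}. \<forall>z \<zeta>. z \<noteq> 0 \<and> z ^ 2 \<noteq> 1 \<longrightarrow>
           det (mat \<zeta> - monodromy N a \<xi> (gE s) (gF s) (gK s) z)
         = det (mat \<zeta> - monodromy N a \<xi> (gE lo) (gF lo) (gK lo) z)"
proof (intro ballI allI impI)
  fix s :: real and z \<zeta> :: complex assume s: "s \<in> {lo..hi}" and zc: "z \<noteq> 0 \<and> z ^ 2 \<noteq> 1"
  let ?js = "[1..<N+1]"
  have z0: "z \<noteq> 0" using zc by auto
  have dj: "distinct ?js" by simp
  have aj: "\<forall>j\<in>set ?js. a j \<noteq> 0" using assms(3) by auto
  have flow: "\<And>t. t \<in> {lo..hi} \<Longrightarrow> in_leaf N tt (gE t) (gF t) (gK t) \<and>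
        (\<forall>j\<in>{1..N}.
           ((\<lambda>r. gE r j) has_vector_derivative hamE (P k) (gE t) (gF t) (gK t) j) (at t within {lo..hi}) \<and>
           ((\<lambda>r. gF r j) has_vector_derivative hamF (P k) (gE t) (gF t) (gK t) j) (at t within {lo..hi}) \<and>
           ((\<lambda>r. gK r j) has_vector_derivative hamK (P k) (gE t) (gF t) (gK t) j) (at t within {lo..hi}))"
    using assms(7) unfolding ham_flow_curve_def by blast
  define R :: real where "R = 1 + norm (z^2) + norm (inverse (z^2))"
  have R1: "R \<ge> 1" by (simp add: R_def)
  define ws where "ws i = complex_of_real (real (i+2) * R)" for i :: nat
  have nws: "norm (ws i) = real (i+2) * R" for i by (simp only: ws_def norm_of_real) (use R1 in simp)
  have nws2: "norm (ws i) \<ge> 2 * R" for i unfolding nws using R1 by (intro mult_right_mono) auto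
  have inj: "inj_on ws {..2*N}"
  proof (rule inj_onI)
    fix i j assume "ws i = ws j"
    then have "norm (ws i) = norm (ws j)" by simp
    then have "real (i+2) * R = real (j+2) * R" by (simp add: nws)
    then show "i = j" using R1 by simp
  qed
  have wsok: "\<forall>i\<le>2*N. ws i \<noteq> 0 \<and> ws i \<noteq> 1 \<and> ws i \<noteq> -1"
  proof (intro allI impI conjI)
    fix i
    have "norm (ws i) \<ge> 2" using nws2[of i] R1 by linarith
    then show "ws i \<noteq> 0" "ws i \<noteq> 1" "ws i \<noteq> -1" by auto
  qed
  have wz: "ws i \<noteq> z^2" "ws i \<noteq> inverse (z^2)" for i
  proof -
    have "norm (ws i) > norm (z^2)" "norm (ws i) > norm (inverse (z^2))"
      using nws2[of i] unfolding R_def by (smt (verit) norm_ge_zero)+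
    then show "ws i \<noteq> z^2" "ws i \<noteq> inverse (z^2)" by auto
  qed
  obtain \<mu> where repr: "\<forall>E F K. ambient N K \<longrightarrow> P k E F K = (\<Sum>i\<le>2*N. \<mu> i * tfun N a \<xi> E F K (csqrt (ws i)))"
    using P_repr[OF P_def \<open>k \<le> N\<close> inj wsok] by blast
  define zs where "zs i = csqrt (ws i)" for i
  have ws0: "ws i \<noteq> 0" for i
  proof -
    have "norm (ws i) > 0" using nws2[of i] R1 by linarith
    then show ?thesis by auto
  qed
  have zs0: "zs i \<noteq> 0" for i using ws0[of i] by (simp add: zs_def)
  have zs2: "(zs i)^2 = ws i" for i by (simp add: zs_def)
  have nd1: "z / zs i - zs i / z \<noteq> 0" for i
  proof
    assume "z / zs i - zs i / z = 0"
    then have "z * z = zs i * zs i" using z0 zs0[of i] by (simp add: field_simps)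
    then have "ws i = z^2" using zs2[of i] by (simp add: power2_eq_square)
    then show False using wz by simp
  qed
  have nd2: "z * zs i - inverse (z * zs i) \<noteq> 0" for i
  proof
    assume "z * zs i - inverse (z * zs i) = 0"
    then have "(z * zs i) * (z * zs i) = 1" using z0 zs0[of i] by (simp add: field_simps)
    then have "z^2 * ws i = 1" using zs2[of i] by (simp add: power2_eq_square algebra_simps)
    then have "ws i = inverse (z^2)" using z0 by (simp add: field_simps)
    then show False using wz by simp
  qed
  have repr': "\<forall>E F K. ambient N K \<longrightarrow> P k E F K = (\<Sum>i\<le>2*N. \<mu> i * tfun N a \<xi> E F K (zs i))"
    using repr by (simp add: zs_def)
  define \<phi> where "\<phi> t = tr2 (Uf a \<xi> (gE t) (gF t) (gK t) ?js z)" for t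
  have deriv0: "(\<phi> has_derivative (\<lambda>h. 0)) (at t within {lo..hi})" if t: "t \<in> {lo..hi}" for t
  proof -
    let ?E = "gE t" and ?F = "gF t" and ?K = "gK t"
    define H where "H j d = (\<Sum>i\<le>2*N. \<mu> i * cz (zs i) * tr2 (G a \<xi> ?E ?F ?K ?js (zs i) j d))" for j d
    define g where "g j d = tr2 (G a \<xi> ?E ?F ?K ?js z j d)" for j d
    have amb: "ambient N ?K" using flow[OF t] by (simp add: in_leaf_def)
    have Kn: "\<forall>j\<in>set ?js. ?K j \<noteq> 0" using amb by (auto simp: ambient_def)
    have dv: "dE (P k) ?E ?F ?K j = H j 0" "dF (P k) ?E ?F ?K j = H j 1" "dK (P k) ?E ?F ?K j = H j 2"
      if "j \<in> {1..N}" for j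
      using dP_vals[where P=P and k=k and \<mu>=\<mu> and zs=zs and a=a and \<xi>=\<xi> and N=N, OF repr' amb that]
      by (simp_all add: H_def)
    have vd: "\<And>f D. (f has_vector_derivative D) (at t within {lo..hi}) \<Longrightarrow> (f has_derivative (\<lambda>h. of_real h * D)) (at t within {lo..hi})"
      by (simp add: has_vector_derivative_def scaleR_conv_of_real)
    have md: "mder of_real (\<lambda>t. Uf a \<xi> (gE t) (gF t) (gK t) ?js z)
       (DUf a \<xi> ?E ?F ?K ?js z (hamE (P k) ?E ?F ?K) (hamF (P k) ?E ?F ?K) (hamK (P k) ?E ?F ?K)) t {lo..hi}"
      using flow[OF t] Kn by (intro mder_Uf[where lf = of_real] dj) (auto intro!: vd)
    have "tr2 (DUf a \<xi> ?E ?F ?K ?js z (hamE (P k) ?E ?F ?K) (hamF (P k) ?E ?F ?K) (hamK (P k) ?E ?F ?K))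
        = (\<Sum>j\<in>set ?js. om (?E j) (?F j) (?K j) (g j) (H j))"
      unfolding tr_DUf
    proof (rule sum.cong[OF refl])
      fix j assume "j \<in> set ?js"
      then have j: "j \<in> {1..N}" by auto
      show "hamE (P k) ?E ?F ?K j * tr2 (G a \<xi> ?E ?F ?K ?js z j 0) + hamF (P k) ?E ?F ?K j * tr2 (G a \<xi> ?E ?F ?K ?js z j 1)
          + hamK (P k) ?E ?F ?K j * tr2 (G a \<xi> ?E ?F ?K ?js z j 2) = om (?E j) (?F j) (?K j) (g j) (H j)"
        by (simp add: hamE_def hamF_def hamK_def dv[OF j] om_def g_def algebra_simps)
    qed
    also have "\<dots> = (\<Sum>j\<in>set ?js. \<Sum>i\<le>2*N. (\<mu> i * cz (zs i)) * om (?E j) (?F j) (?K j) (g j) (\<lambda>d. tr2 (G a \<xi> ?E ?F ?K ?js (zs i) j d)))"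
      unfolding H_def by (simp add: om_lin)
    also have "\<dots> = (\<Sum>i\<le>2*N. (\<mu> i * cz (zs i)) * (\<Sum>j\<in>set ?js. om (?E j) (?F j) (?K j) (\<lambda>d. tr2 (G a \<xi> ?E ?F ?K ?js z j d)) (\<lambda>d. tr2 (G a \<xi> ?E ?F ?K ?js (zs i) j d))))"
    proof -
      have ge: "g j = (\<lambda>d. tr2 (G a \<xi> ?E ?F ?K ?js z j d))" for j by (simp add: g_def fun_eq_iff)
      show ?thesis by (subst sum.swap) (simp only: sum_distrib_left ge)
    qed
    also have "\<dots> = 0"
    proof (rule sum.neutral, rule ballI)
      fix i assume "i \<in> {..2*N}"
      have "(\<Sum>j\<in>set ?js. om (?E j) (?F j) (?K j) (\<lambda>d. tr2 (G a \<xi> ?E ?F ?K ?js z j d)) (\<lambda>d. tr2 (G a \<xi> ?E ?F ?K ?js (zs i) j d))) = 0"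
        using Kn aj by (intro involution dj \<open>\<xi> \<noteq> 0\<close> z0 zs0 nd1 nd2) auto
      then show "(\<mu> i * cz (zs i)) * (\<Sum>j\<in>set ?js. om (?E j) (?F j) (?K j) (\<lambda>d. tr2 (G a \<xi> ?E ?F ?K ?js z j d)) (\<lambda>d. tr2 (G a \<xi> ?E ?F ?K ?js (zs i) j d))) = 0"
        by simp
    qed
    finally have tr0: "tr2 (DUf a \<xi> ?E ?F ?K ?js z (hamE (P k) ?E ?F ?K) (hamF (P k) ?E ?F ?K) (hamK (P k) ?E ?F ?K)) = 0" .
    show ?thesis using mder_tr2[OF md] unfolding tr0 \<phi>_def by simp
  qed
  obtain c where "\<forall>t\<in>{lo..hi}. \<phi> t = c"
    using has_derivative_zero_constant[of "{lo..hi}" \<phi>] deriv0 by auto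
  then have phieq: "\<phi> s = \<phi> lo" using s \<open>lo \<le> hi\<close> by auto
  have deteq: "det (Uf a \<xi> (gE s) (gF s) (gK s) ?js z) = det (Uf a \<xi> (gE lo) (gF lo) (gK lo) ?js z)"
  proof (rule det_Uf_eq[OF _ z0])
    have l1: "in_leaf N tt (gE s) (gF s) (gK s)" and l2: "in_leaf N tt (gE lo) (gF lo) (gK lo)"
      using flow[OF s] flow[of lo] \<open>lo \<le> hi\<close> by auto
    show "\<forall>j\<in>set ?js. gK s j \<noteq> 0 \<and> gK lo j \<noteq> 0 \<and> a j \<noteq> 0 \<and> casimir (gE s) (gF s) (gK s) j = casimir (gE lo) (gF lo) (gK lo) j"
      using l1 l2 aj by (auto simp: in_leaf_def ambient_def)
  qed
  show "det (mat \<zeta> - monodromy N a \<xi> (gE s) (gF s) (gK s) z) = det (mat \<zeta> - monodromy N a \<xi> (gE lo) (gF lo) (gK lo) z)"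
    unfolding monodromy_Uf det_char using phieq deteq by (simp add: \<phi>_def)
qed

end
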